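(* Let $n\geq 3$, let $\mathrm{D}_{2n}=\langle a,b\mid a^n=b^2=1,\ b^{-1}ab=a^{-1}\rangle$, let $\Gamma=\mathrm{Cay}(\mathrm{D}_{2n},S)$ be a Cayley digraph of $\mathrm{D}_{2n}$, and let $A=\mathrm{Aut}(\Gamma)$. Suppose $A$ has a subgroup $R$ which is regular on the vertex set of $\Gamma$ and isomorphic to $\mathrm{D}_{2n}$. Then $R$ and $R(\mathrm{D}_{2n})$ are conjugate in $A$ if and only if the unique cyclic subgroup of order $n$ in $R$ is conjugate in $A$ to $\langle R(a)\rangle$.
   Context: For a group $G$ and a subset $S\subseteq G$ with $1\notin S$, the Cayley digraph $\mathrm{Cay}(G,S)$ has vertex set $G$ and arc set $\{(g,sg)\mid g\in G,\ s\in S\}$. For $g\in G$, $R(g)$ denotes the right multiplication $x\mapsto xg$ on $G$, which is an automorphism of $\mathrm{Cay}(G,S)$; $R(G)=\{R(g)\mid g\in G\}$ is the right regular representation. A subgroup of $\mathrm{Aut}(\Gamma)$ is regular if it acts transitively on the vertices with trivial vertex stabilizers. *)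

theory Defs
  imports "HOL-Algebra.Algebra"
begin

text \<open>Dihedral group of order 2n: the pair (i, s) encodes a^i b^s with 0 <= i < n,
  where s = True means the factor b is present. Multiplication:
  a^i b^s a^j b^t = a^(i + (if s then -j else j)) b^(s xor t).\<close>
definition dihedral :: "nat \<Rightarrow> (nat \<times> bool) monoid" where
  "dihedral n = \<lparr>carrier = {0..<n} \<times> UNIV,
     monoid.mult = (\<lambda>(i, s) (j, t). ((if s then i + n - j else i + j) mod n, s \<noteq> t)),
     monoid.one = (0, False)\<rparr>"

definition dih_a :: "nat \<Rightarrow> nat \<times> bool" where "dih_a n = (1 mod n, False)"
definition dih_b :: "nat \<times> bool" where "dih_b = (0, True)"

definition cay_arc :: "('a, 'b) monoid_scheme \<Rightarrow> 'a set \<Rightarrow> 'a \<Rightarrow> 'a \<Rightarrow> bool" where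
  "cay_arc G S x y \<longleftrightarrow> x \<in> carrier G \<and> y \<in> carrier G \<and> (\<exists>s\<in>S. y = s \<otimes>\<^bsub>G\<^esub> x)"

definition cay_aut_group :: "('a, 'b) monoid_scheme \<Rightarrow> 'a set \<Rightarrow> ('a \<Rightarrow> 'a) monoid" where
  "cay_aut_group G S = BijGroup (carrier G) \<lparr>carrier :=
     {f \<in> Bij (carrier G). \<forall>x\<in>carrier G. \<forall>y\<in>carrier G.
         cay_arc G S x y \<longleftrightarrow> cay_arc G S (f x) (f y)}\<rparr>"

definition right_mult :: "('a, 'b) monoid_scheme \<Rightarrow> 'a \<Rightarrow> ('a \<Rightarrow> 'a)" where
  "right_mult G g = (\<lambda>x\<in>carrier G. x \<otimes>\<^bsub>G\<^esub> g)"

definition right_reg :: "('a, 'b) monoid_scheme \<Rightarrow> ('a \<Rightarrow> 'a) set" where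
  "right_reg G = right_mult G ` carrier G"

definition regular_on :: "('c \<Rightarrow> 'c) monoid \<Rightarrow> 'c set \<Rightarrow> ('c \<Rightarrow> 'c) set \<Rightarrow> bool" where
  "regular_on A V R \<longleftrightarrow> subgroup R A \<and>
     (\<forall>x\<in>V. \<forall>y\<in>V. \<exists>r\<in>R. r x = y) \<and>
     (\<forall>x\<in>V. \<forall>r\<in>R. r x = x \<longrightarrow> r = \<one>\<^bsub>A\<^esub>)"

definition conjugate_in :: "('c, 'd) monoid_scheme \<Rightarrow> 'c set \<Rightarrow> 'c set \<Rightarrow> bool" where
  "conjugate_in A H K \<longleftrightarrow>
     (\<exists>\<sigma>\<in>carrier A. (\<lambda>h. \<sigma> \<otimes>\<^bsub>A\<^esub> h \<otimes>\<^bsub>A\<^esub> inv\<^bsub>A\<^esub> \<sigma>) ` H = K)"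

end

theory Submission
  imports Defs
begin


lemma dmult: "(i, s) \<otimes>\<^bsub>dihedral n\<^esub> (j, t) = ((if s then i + n - j else i + j) mod n, s \<noteq> t)"
  by (simp add: dihedral_def)
lemma dcarrier: "carrier (dihedral n) = {0..<n} \<times> UNIV"
  by (simp add: dihedral_def)
lemma d_one: "\<one>\<^bsub>dihedral n\<^esub> = (0, False)"
  by (simp add: dihedral_def)

lemma int_aux: "j < n \<Longrightarrow> int ((if s then i + n - j else i + j) mod n) = (if s then int i - int j else int i + int j) mod int n"
proof -
  assume j: "j < n"
  have "int ((i + n - j) mod n) = (int i + int n - int j) mod int n"
    using j by (simp add: zmod_int of_nat_diff)
  also have "\<dots> = (int i - int j) mod int n"
    by (metis add.commute add_diff_eq mod_add_self1)
  finally show ?thesis by (simp add: zmod_int)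
qed

lemma int_sub: "j < n \<Longrightarrow> int ((i + n - j) mod n) = (int i - int j) mod int n"
  using int_aux[of j n True i] by simp
lemma int_add: "int ((i + j) mod n) = (int i + int j) mod int n"
  by (simp add: zmod_int)

lemma pair_eq_int: "a < n \<Longrightarrow> b < n \<Longrightarrow> int a mod int n = int b mod int n \<Longrightarrow> a = b"
  by (metis mod_less of_nat_eq_iff zmod_int)

lemma D_group: assumes "n \<ge> 1" shows "group (dihedral n)"
proof (rule groupI)
  fix x y assume "x \<in> carrier (dihedral n)" "y \<in> carrier (dihedral n)"
  then show "x \<otimes>\<^bsub>dihedral n\<^esub> y \<in> carrier (dihedral n)"
    using assms by (cases x, cases y) (auto simp: dmult dcarrier)
next
  show "\<one>\<^bsub>dihedral n\<^esub> \<in> carrier (dihedral n)" using assms by (simp add: d_one dcarrier)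
next
  fix x y z assume xyz: "x \<in> carrier (dihedral n)" "y \<in> carrier (dihedral n)" "z \<in> carrier (dihedral n)"
  obtain i s j t k u where e: "x = (i,s)" "y = (j,t)" "z = (k,u)" by (cases x, cases y, cases z) auto
  have ijk: "i < n" "j < n" "k < n" using xyz e by (auto simp: dcarrier)
  have n0: "n > 0" using assms by simp
  define A where "A = (if s then i + n - j else i + j) mod n"
  define B where "B = (if t then j + n - k else j + k) mod n"
  have AB: "A < n" "B < n" using n0 by (auto simp: A_def B_def)
  have iA: "int A = (if s then int i - int j else int i + int j) mod int n"
    unfolding A_def by (rule int_aux[OF ijk(2)])
  have iB: "int B = (if t then int j - int k else int j + int k) mod int n"
    unfolding B_def by (rule int_aux[OF ijk(3)])
  have "int ((if s \<noteq> t then A + n - k else A + k) mod n) = int ((if s then i + n - B else i + B) mod n)"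
    apply (subst int_aux[OF ijk(3)])
    apply (subst int_aux[OF AB(2)])
    apply (simp only: iA iB)
    apply (cases s; cases t; simp add: mod_diff_left_eq mod_add_left_eq mod_diff_right_eq mod_add_right_eq diff_diff_eq2 add_diff_eq diff_diff_eq)
    apply (simp_all add: algebra_simps)
    done
  then have "(if s \<noteq> t then A + n - k else A + k) mod n = (if s then i + n - B else i + B) mod n"
    by (metis of_nat_eq_iff)
  moreover have "x \<otimes>\<^bsub>dihedral n\<^esub> y \<otimes>\<^bsub>dihedral n\<^esub> z = ((if s \<noteq> t then A + n - k else A + k) mod n, (s \<noteq> t) \<noteq> u)"
    by (simp add: e dmult A_def)
  moreover have "x \<otimes>\<^bsub>dihedral n\<^esub> (y \<otimes>\<^bsub>dihedral n\<^esub> z) = ((if s then i + n - B else i + B) mod n, s \<noteq> (t \<noteq> u))"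
    by (simp add: e dmult B_def)
  moreover have "((s \<noteq> t) \<noteq> u) = (s \<noteq> (t \<noteq> u))" by (cases s; cases t; cases u) simp_all
  ultimately show "x \<otimes>\<^bsub>dihedral n\<^esub> y \<otimes>\<^bsub>dihedral n\<^esub> z = x \<otimes>\<^bsub>dihedral n\<^esub> (y \<otimes>\<^bsub>dihedral n\<^esub> z)"
    by (simp only:)
next
  fix x assume "x \<in> carrier (dihedral n)"
  then show "\<one>\<^bsub>dihedral n\<^esub> \<otimes>\<^bsub>dihedral n\<^esub> x = x"
    by (cases x) (auto simp: dmult d_one dcarrier)
next
  fix x assume x: "x \<in> carrier (dihedral n)"
  obtain i s where e: "x = (i,s)" by (cases x)
  have i: "i < n" using x e by (auto simp: dcarrier)
  show "\<exists>y\<in>carrier (dihedral n). y \<otimes>\<^bsub>dihedral n\<^esub> x = \<one>\<^bsub>dihedral n\<^esub>"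
  proof (cases s)
    case True
    then show ?thesis using e i by (intro bexI[of _ "(i, True)"]) (auto simp: dmult d_one dcarrier)
  next
    case False
    have "((n - i) mod n + i) mod n = ((n - i) + i) mod n" by (rule mod_add_left_eq)
    also have "\<dots> = 0" using i by simp
    finally have "((n - i) mod n + i) mod n = 0" .
    then show ?thesis using e i False
      by (intro bexI[of _ "((n - i) mod n, False)"]) (simp_all add: dmult d_one dcarrier)
  qed
qed




lemma aut_carrier: "carrier (cay_aut_group G S) = {f \<in> Bij (carrier G). \<forall>x\<in>carrier G. \<forall>y\<in>carrier G.
         cay_arc G S x y \<longleftrightarrow> cay_arc G S (f x) (f y)}"
  by (simp add: cay_aut_group_def BijGroup_def)

lemma aut_mult: "f \<in> carrier (cay_aut_group G S) \<Longrightarrow> g \<in> carrier (cay_aut_group G S) \<Longrightarrow>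
   f \<otimes>\<^bsub>cay_aut_group G S\<^esub> g = compose (carrier G) f g"
  by (simp add: cay_aut_group_def BijGroup_def)

lemma aut_one: "\<one>\<^bsub>cay_aut_group G S\<^esub> = (\<lambda>x\<in>carrier G. x)"
  by (simp add: cay_aut_group_def BijGroup_def)

lemma aut_subgroup: "subgroup {f \<in> Bij (carrier G). \<forall>x\<in>carrier G. \<forall>y\<in>carrier G.
         cay_arc G S x y \<longleftrightarrow> cay_arc G S (f x) (f y)} (BijGroup (carrier G))"
proof (rule group.subgroupI[OF group_BijGroup])
  show "{f \<in> Bij (carrier G). \<forall>x\<in>carrier G. \<forall>y\<in>carrier G. cay_arc G S x y = cay_arc G S (f x) (f y)}
    \<subseteq> carrier (BijGroup (carrier G))" by (auto simp: BijGroup_def)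
next
  show "{f \<in> Bij (carrier G). \<forall>x\<in>carrier G. \<forall>y\<in>carrier G. cay_arc G S x y = cay_arc G S (f x) (f y)} \<noteq> {}"
    using id_Bij by fastforce
next
  fix f assume f: "f \<in> {f \<in> Bij (carrier G). \<forall>x\<in>carrier G. \<forall>y\<in>carrier G. cay_arc G S x y = cay_arc G S (f x) (f y)}"
  then have fB: "f \<in> Bij (carrier G)" by simp
  have inv: "inv\<^bsub>BijGroup (carrier G)\<^esub> f = (\<lambda>x \<in> carrier G. (inv_into (carrier G) f) x)"
    using inv_BijGroup[OF fB] .
  have bij: "bij_betw f (carrier G) (carrier G)" using fB by (simp add: Bij_def)
  show "inv\<^bsub>BijGroup (carrier G)\<^esub> f \<in> {f \<in> Bij (carrier G). \<forall>x\<in>carrier G. \<forall>y\<in>carrier G. cay_arc G S x y = cay_arc G S (f x) (f y)}"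
  proof (simp add: inv restrict_inv_into_Bij[OF fB], intro ballI)
    fix x y assume x: "x \<in> carrier G" and y: "y \<in> carrier G"
    have x': "inv_into (carrier G) f x \<in> carrier G" "f (inv_into (carrier G) f x) = x"
      using bij x by (auto simp: bij_betw_def inv_into_into f_inv_into_f)
    have y': "inv_into (carrier G) f y \<in> carrier G" "f (inv_into (carrier G) f y) = y"
      using bij y by (auto simp: bij_betw_def inv_into_into f_inv_into_f)
    show "cay_arc G S x y = cay_arc G S (inv_into (carrier G) f x) (inv_into (carrier G) f y)"
      using f x' y' by auto
  qed
next
  fix f g assume f: "f \<in> {f \<in> Bij (carrier G). \<forall>x\<in>carrier G. \<forall>y\<in>carrier G. cay_arc G S x y = cay_arc G S (f x) (f y)}"
    and g: "g \<in> {f \<in> Bij (carrier G). \<forall>x\<in>carrier G. \<forall>y\<in>carrier G. cay_arc G S x y = cay_arc G S (f x) (f y)}"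
  have fg: "f \<otimes>\<^bsub>BijGroup (carrier G)\<^esub> g = compose (carrier G) f g"
    using f g by (simp add: BijGroup_def)
  have gV: "\<And>x. x \<in> carrier G \<Longrightarrow> g x \<in> carrier G" using g Bij_imp_funcset by fastforce
  show "f \<otimes>\<^bsub>BijGroup (carrier G)\<^esub> g \<in> {f \<in> Bij (carrier G). \<forall>x\<in>carrier G. \<forall>y\<in>carrier G. cay_arc G S x y = cay_arc G S (f x) (f y)}"
  proof (simp add: fg, intro conjI ballI)
    show "compose (carrier G) f g \<in> Bij (carrier G)" using f g by (simp add: compose_Bij)
    fix x y assume x: "x \<in> carrier G" and y: "y \<in> carrier G"
    have "cay_arc G S x y = cay_arc G S (g x) (g y)" using g x y by simp
    also have "\<dots> = cay_arc G S (f (g x)) (f (g y))" using f gV x y by simp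
    finally show "cay_arc G S x y = cay_arc G S (compose (carrier G) f g x) (compose (carrier G) f g y)"
      using x y by (simp add: compose_def)
  qed
qed

lemma aut_group: "group (cay_aut_group G S)"
  unfolding cay_aut_group_def by (rule subgroup.subgroup_is_group[OF aut_subgroup group_BijGroup])

lemma aut_funcset: "f \<in> carrier (cay_aut_group G S) \<Longrightarrow> x \<in> carrier G \<Longrightarrow> f x \<in> carrier G"
  by (auto simp: aut_carrier Bij_def bij_betw_def)

lemma aut_ext: "f \<in> carrier (cay_aut_group G S) \<Longrightarrow> f \<in> extensional (carrier G)"
  by (auto simp: aut_carrier Bij_def)

lemma aut_mult_apply: "f \<in> carrier (cay_aut_group G S) \<Longrightarrow> g \<in> carrier (cay_aut_group G S) \<Longrightarrow>
   x \<in> carrier G \<Longrightarrow> (f \<otimes>\<^bsub>cay_aut_group G S\<^esub> g) x = f (g x)"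
  by (simp add: aut_mult compose_def)

lemma aut_one_apply: "x \<in> carrier G \<Longrightarrow> \<one>\<^bsub>cay_aut_group G S\<^esub> x = x"
  by (simp add: aut_one)

lemma aut_eqI: "f \<in> carrier (cay_aut_group G S) \<Longrightarrow> g \<in> carrier (cay_aut_group G S) \<Longrightarrow>
   (\<And>x. x \<in> carrier G \<Longrightarrow> f x = g x) \<Longrightarrow> f = g"
  using aut_ext extensionalityI by metis

lemma right_mult_aut:
  assumes G: "group G" and SG: "S \<subseteq> carrier G" and g: "g \<in> carrier G"
  shows "right_mult G g \<in> carrier (cay_aut_group G S)"
proof -
  interpret G: group G by fact
  have bij: "bij_betw (right_mult G g) (carrier G) (carrier G)"
  proof (rule bij_betwI[where g = "right_mult G (inv\<^bsub>G\<^esub> g)"])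
    show "right_mult G g \<in> carrier G \<rightarrow> carrier G" using g by (auto simp: right_mult_def)
    show "right_mult G (inv\<^bsub>G\<^esub> g) \<in> carrier G \<rightarrow> carrier G" using g by (auto simp: right_mult_def)
    show "\<And>x. x \<in> carrier G \<Longrightarrow> right_mult G (inv\<^bsub>G\<^esub> g) (right_mult G g x) = x"
      using g by (simp add: right_mult_def G.m_assoc)
    show "\<And>x. x \<in> carrier G \<Longrightarrow> right_mult G g (right_mult G (inv\<^bsub>G\<^esub> g) x) = x"
      using g by (simp add: right_mult_def G.m_assoc)
  qed
  have arcs: "cay_arc G S x y \<longleftrightarrow> cay_arc G S (right_mult G g x) (right_mult G g y)"
    if x: "x \<in> carrier G" and y: "y \<in> carrier G" for x y
  proof
    assume "cay_arc G S x y"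
    then obtain s where s: "s \<in> S" "y = s \<otimes>\<^bsub>G\<^esub> x" by (auto simp: cay_arc_def)
    then show "cay_arc G S (right_mult G g x) (right_mult G g y)"
      using x y g SG by (auto simp: cay_arc_def right_mult_def G.m_assoc intro!: bexI[of _ s])
  next
    assume "cay_arc G S (right_mult G g x) (right_mult G g y)"
    then obtain s where s: "s \<in> S" "y \<otimes>\<^bsub>G\<^esub> g = s \<otimes>\<^bsub>G\<^esub> (x \<otimes>\<^bsub>G\<^esub> g)"
      using x y by (auto simp: cay_arc_def right_mult_def)
    then have "y \<otimes>\<^bsub>G\<^esub> g = (s \<otimes>\<^bsub>G\<^esub> x) \<otimes>\<^bsub>G\<^esub> g" using x g SG by (simp add: G.m_assoc subsetD)
    then have "y = s \<otimes>\<^bsub>G\<^esub> x" using x y g SG s by (meson G.m_closed G.right_cancel subsetD)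
    then show "cay_arc G S x y" using s x y by (auto simp: cay_arc_def)
  qed
  show ?thesis using bij arcs by (auto simp: aut_carrier Bij_def right_mult_def)
qed

lemma right_mult_mult:
  assumes G: "group G" and SG: "S \<subseteq> carrier G" and g: "g \<in> carrier G" and h: "h \<in> carrier G"
  shows "right_mult G g \<otimes>\<^bsub>cay_aut_group G S\<^esub> right_mult G h = right_mult G (h \<otimes>\<^bsub>G\<^esub> g)"
proof -
  interpret G: group G by fact
  show ?thesis
    using right_mult_aut[OF G SG g] right_mult_aut[OF G SG h] g h
    by (auto simp: aut_mult compose_def right_mult_def G.m_assoc)
qed

lemma right_mult_one:
  assumes G: "group G"
  shows "right_mult G \<one>\<^bsub>G\<^esub> = \<one>\<^bsub>cay_aut_group G S\<^esub>"
proof -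
  interpret G: group G by fact
  show ?thesis by (auto simp: aut_one right_mult_def)
qed

lemma right_mult_inj:
  assumes G: "group G"
  shows "inj_on (right_mult G) (carrier G)"
proof -
  interpret G: group G by fact
  show ?thesis
  proof (rule inj_onI)
    fix g h assume "g \<in> carrier G" "h \<in> carrier G" "right_mult G g = right_mult G h"
    then have "right_mult G g \<one>\<^bsub>G\<^esub> = right_mult G h \<one>\<^bsub>G\<^esub>" by simp
    then show "g = h" using \<open>g \<in> carrier G\<close> \<open>h \<in> carrier G\<close> by (simp add: right_mult_def)
  qed
qed

lemma gen_invol:
  assumes G: "group G" and c: "c \<in> carrier G" and cc: "c \<otimes>\<^bsub>G\<^esub> c = \<one>\<^bsub>G\<^esub>"
  shows "generate G {c} \<subseteq> {\<one>\<^bsub>G\<^esub>, c}"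
proof
  interpret G: group G by fact
  have ic: "inv\<^bsub>G\<^esub> c = c" using c cc G.inv_equality by blast
  fix x assume "x \<in> generate G {c}"
  then show "x \<in> {\<one>\<^bsub>G\<^esub>, c}"
  proof (induction rule: generate.induct)
    case one then show ?case by simp
  next
    case (incl h) then show ?case by simp
  next
    case (inv h) then show ?case using ic by simp
  next
    case (eng h1 h2) then show ?case using c cc by auto
  qed
qed

lemma card_gen_invol:
  assumes G: "group G" and c: "c \<in> carrier G" and cc: "c \<otimes>\<^bsub>G\<^esub> c = \<one>\<^bsub>G\<^esub>"
  shows "card (generate G {c}) \<le> 2"
proof -
  have "card (generate G {c}) \<le> card {\<one>\<^bsub>G\<^esub>, c}"
    by (rule card_mono) (simp, rule gen_invol[OF assms])
  also have "\<dots> \<le> 2" by (simp add: card_insert_le_m1)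
  finally show ?thesis .
qed




locale dcay =
  fixes n :: nat and S :: "(nat \<times> bool) set"
  assumes n3: "n \<ge> 3" and SV: "S \<subseteq> carrier (dihedral n)"
begin

abbreviation "D \<equiv> dihedral n"
abbreviation "V \<equiv> carrier (dihedral n)"
abbreviation "AA \<equiv> cay_aut_group (dihedral n) S"
abbreviation "Rm \<equiv> right_mult (dihedral n)"

definition "DRot = {x \<in> V. \<not> snd x}"
definition "Rot = Rm ` DRot"

lemma n0: "n > 0" using n3 by simp

lemma Dg: "group D" using D_group n3 by simp
lemma Ag: "group AA" by (rule aut_group)

sublocale D: group D by (rule Dg)
sublocale AA: group AA by (rule Ag)

lemma Rm_aut: "g \<in> V \<Longrightarrow> Rm g \<in> carrier AA"
  by (rule right_mult_aut[OF Dg SV])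

lemma Rm_mult: "g \<in> V \<Longrightarrow> h \<in> V \<Longrightarrow> Rm g \<otimes>\<^bsub>AA\<^esub> Rm h = Rm (h \<otimes>\<^bsub>D\<^esub> g)"
  by (rule right_mult_mult[OF Dg SV])

lemma Rm_one: "Rm \<one>\<^bsub>D\<^esub> = \<one>\<^bsub>AA\<^esub>"
  by (rule right_mult_one[OF Dg])

lemma Rm_apply: "v \<in> V \<Longrightarrow> Rm g v = v \<otimes>\<^bsub>D\<^esub> g"
  by (simp add: right_mult_def)

lemma Rm_inj: "inj_on Rm V" by (rule right_mult_inj[OF Dg])

lemma snd_mult: "snd (x \<otimes>\<^bsub>D\<^esub> y) = (snd x \<noteq> snd y)"
  by (cases x; cases y) (simp add: dmult)

lemma snd_one: "snd \<one>\<^bsub>D\<^esub> = False" by (simp add: d_one)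

lemma card_V: "card V = 2 * n"
  by (simp add: dcarrier card_cartesian_product)

lemma DRot_eq: "DRot = {0..<n} \<times> {False}"
  by (auto simp: DRot_def dcarrier)

lemma card_DRot: "card DRot = n"
  by (simp add: DRot_eq card_cartesian_product)

lemma DRot_sub: "DRot \<subseteq> V" by (auto simp: DRot_def)

lemma card_Rot: "card Rot = n"
  unfolding Rot_def using card_image[OF inj_on_subset[OF Rm_inj DRot_sub]] card_DRot by simp

lemma finite_V: "finite V" by (simp add: dcarrier)

lemma card_RG: "card (right_reg D) = 2 * n"
  unfolding right_reg_def using card_image[OF Rm_inj] card_V by simp

lemma RG_sub: "right_reg D \<subseteq> carrier AA"
  unfolding right_reg_def using Rm_aut by auto

lemma Rot_sub_RG: "Rot \<subseteq> right_reg D"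
  unfolding Rot_def right_reg_def using DRot_sub by auto

lemma Rm_inv: "g \<in> V \<Longrightarrow> inv\<^bsub>AA\<^esub> (Rm g) = Rm (inv\<^bsub>D\<^esub> g)"
  using AA.inv_equality[of "Rm (inv\<^bsub>D\<^esub> g)" "Rm g"] Rm_mult Rm_aut Rm_one by simp

lemma snd_inv: "g \<in> V \<Longrightarrow> snd (inv\<^bsub>D\<^esub> g) = snd g"
  using snd_mult[of "inv\<^bsub>D\<^esub> g" g] snd_one by simp

lemma Rot_subgroup: "subgroup Rot AA"
proof (rule AA.subgroupI)
  show "Rot \<subseteq> carrier AA" unfolding Rot_def using DRot_sub Rm_aut by auto
  show "Rot \<noteq> {}" unfolding Rot_def DRot_eq using n0 by auto
next
  fix r assume "r \<in> Rot"
  then obtain g where g: "g \<in> DRot" "r = Rm g" by (auto simp: Rot_def)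
  then show "inv\<^bsub>AA\<^esub> r \<in> Rot"
    using DRot_sub snd_inv by (auto simp: Rm_inv Rot_def DRot_def)
next
  fix r q assume "r \<in> Rot" "q \<in> Rot"
  then obtain g h where g: "g \<in> DRot" "r = Rm g" and h: "h \<in> DRot" "q = Rm h" by (auto simp: Rot_def)
  then show "r \<otimes>\<^bsub>AA\<^esub> q \<in> Rot"
    using DRot_sub snd_mult by (auto simp: Rm_mult Rot_def DRot_def)
qed

lemma a_eq: "dih_a n = (1, False)" using n3 by (simp add: dih_a_def)

lemma a_V: "dih_a n \<in> V" using n3 by (simp add: a_eq dcarrier)

lemma Rm_a_pow: "Rm (dih_a n) [^]\<^bsub>AA\<^esub> (k::nat) = Rm (k mod n, False)"
proof (induction k)
  case 0
  then show ?case using Rm_one by (simp add: d_one)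
next
  case (Suc k)
  have "Rm (dih_a n) [^]\<^bsub>AA\<^esub> Suc k = Rm (k mod n, False) \<otimes>\<^bsub>AA\<^esub> Rm (1, False)"
    using Suc a_eq by simp
  also have "\<dots> = Rm ((1, False) \<otimes>\<^bsub>D\<^esub> (k mod n, False))"
    using n0 n3 by (intro Rm_mult) (auto simp: dcarrier)
  also have "(1, False) \<otimes>\<^bsub>D\<^esub> (k mod n, False) = (Suc k mod n, False)"
    by (simp add: dmult mod_Suc_eq)
  finally show ?case .
qed

lemma gen_Rot: "generate AA {Rm (dih_a n)} = Rot"
proof
  show "generate AA {Rm (dih_a n)} \<subseteq> Rot"
    using AA.generate_subgroup_incl[OF _ Rot_subgroup] a_V a_eq by (auto simp: Rot_def DRot_def)
next
  have pw: "Rm (dih_a n) [^]\<^bsub>AA\<^esub> (k::nat) \<in> generate AA {Rm (dih_a n)}" for k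
  proof (induction k)
    case 0 then show ?case by (simp add: generate.one)
  next
    case (Suc k) then show ?case by (simp add: generate.eng generate.incl)
  qed
  show "Rot \<subseteq> generate AA {Rm (dih_a n)}"
  proof
    fix r assume "r \<in> Rot"
    then obtain i where "i < n" "r = Rm (i, False)" by (auto simp: Rot_def DRot_eq)
    then show "r \<in> generate AA {Rm (dih_a n)}" using pw[of i] Rm_a_pow[of i] by simp
  qed
qed

end



context dcay begin

definition "kap \<sigma> y = \<sigma> \<otimes>\<^bsub>AA\<^esub> y \<otimes>\<^bsub>AA\<^esub> inv\<^bsub>AA\<^esub> \<sigma>"

lemma inv_cancel_left: "\<sigma> \<in> carrier AA \<Longrightarrow> z \<in> carrier AA \<Longrightarrow> inv\<^bsub>AA\<^esub> \<sigma> \<otimes>\<^bsub>AA\<^esub> (\<sigma> \<otimes>\<^bsub>AA\<^esub> z) = z"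
  by (simp add: AA.m_assoc[symmetric])

lemma kap_closed: "\<sigma> \<in> carrier AA \<Longrightarrow> y \<in> carrier AA \<Longrightarrow> kap \<sigma> y \<in> carrier AA"
  by (simp add: kap_def)

lemma kap_mult: "\<sigma> \<in> carrier AA \<Longrightarrow> x \<in> carrier AA \<Longrightarrow> y \<in> carrier AA \<Longrightarrow>
  kap \<sigma> (x \<otimes>\<^bsub>AA\<^esub> y) = kap \<sigma> x \<otimes>\<^bsub>AA\<^esub> kap \<sigma> y"
  by (simp add: kap_def AA.m_assoc inv_cancel_left)

lemma kap_one: "\<sigma> \<in> carrier AA \<Longrightarrow> kap \<sigma> \<one>\<^bsub>AA\<^esub> = \<one>\<^bsub>AA\<^esub>"
  by (simp add: kap_def)

lemma kap_inj: "\<sigma> \<in> carrier AA \<Longrightarrow> inj_on (kap \<sigma>) (carrier AA)"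
proof (rule inj_onI)
  fix x y assume s: "\<sigma> \<in> carrier AA" and x: "x \<in> carrier AA" and y: "y \<in> carrier AA" and e: "kap \<sigma> x = kap \<sigma> y"
  then show "x = y" using s x y by (simp add: kap_def)
qed

lemma kap_inv: "\<sigma> \<in> carrier AA \<Longrightarrow> y \<in> carrier AA \<Longrightarrow> kap \<sigma> (inv\<^bsub>AA\<^esub> y) = inv\<^bsub>AA\<^esub> (kap \<sigma> y)"
  using AA.inv_equality[of "kap \<sigma> (inv\<^bsub>AA\<^esub> y)" "kap \<sigma> y"] kap_mult[of \<sigma> "inv\<^bsub>AA\<^esub> y" y] kap_one kap_closed
  by simp

lemma D_refl_sq: "g \<in> V \<Longrightarrow> snd g \<Longrightarrow> g \<otimes>\<^bsub>D\<^esub> g = \<one>\<^bsub>D\<^esub>"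
  by (cases g) (auto simp: dmult d_one dcarrier)

lemma gen_card_ge: assumes "c \<in> carrier AA" "card (generate AA {c}) = n" shows "c \<otimes>\<^bsub>AA\<^esub> c \<noteq> \<one>\<^bsub>AA\<^esub>"
  using card_gen_invol[OF Ag assms(1)] assms(2) n3 by auto

lemma fwd:
  assumes s: "\<sigma> \<in> carrier AA" and KR: "kap \<sigma> ` R = right_reg D" and CR: "C \<subseteq> R"
    and RA: "R \<subseteq> carrier AA" and c: "C = generate AA {c}" "c \<in> C" and cardC: "card C = n"
  shows "kap \<sigma> ` C = Rot"
proof -
  have cA: "c \<in> carrier AA" using c CR RA by auto
  have CA: "C \<subseteq> carrier AA" using CR RA by auto
  have kc: "kap \<sigma> c \<in> Rot"
  proof (rule ccontr)
    assume nk: "kap \<sigma> c \<notin> Rot"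
    have "kap \<sigma> c \<in> right_reg D" using KR c CR by auto
    then obtain g where g: "g \<in> V" "kap \<sigma> c = Rm g" by (auto simp: right_reg_def)
    have "snd g" using nk g by (auto simp: Rot_def DRot_def)
    then have "kap \<sigma> (c \<otimes>\<^bsub>AA\<^esub> c) = kap \<sigma> \<one>\<^bsub>AA\<^esub>"
      using g kap_mult[OF s cA cA] kap_one[OF s] Rm_mult D_refl_sq Rm_one by simp
    then have "c \<otimes>\<^bsub>AA\<^esub> c = \<one>\<^bsub>AA\<^esub>" using kap_inj[OF s] cA by (auto dest: inj_onD)
    then show False using gen_card_ge[OF cA] c cardC by simp
  qed
  have P: "subgroup {y \<in> carrier AA. kap \<sigma> y \<in> Rot} AA"
  proof (rule AA.subgroupI)
    show "{y \<in> carrier AA. kap \<sigma> y \<in> Rot} \<noteq> {}"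
      using kap_one[OF s] subgroup.one_closed[OF Rot_subgroup] by (auto intro!: exI[of _ "\<one>\<^bsub>AA\<^esub>"])
  next
    fix y assume "y \<in> {y \<in> carrier AA. kap \<sigma> y \<in> Rot}"
    then show "inv\<^bsub>AA\<^esub> y \<in> {y \<in> carrier AA. kap \<sigma> y \<in> Rot}"
      using kap_inv[OF s] subgroup.m_inv_closed[OF Rot_subgroup] by auto
  next
    fix x y assume "x \<in> {y \<in> carrier AA. kap \<sigma> y \<in> Rot}" "y \<in> {y \<in> carrier AA. kap \<sigma> y \<in> Rot}"
    then show "x \<otimes>\<^bsub>AA\<^esub> y \<in> {y \<in> carrier AA. kap \<sigma> y \<in> Rot}"
      using kap_mult[OF s] subgroup.m_closed[OF Rot_subgroup] by auto
  qed auto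
  have "C \<subseteq> {y \<in> carrier AA. kap \<sigma> y \<in> Rot}"
    unfolding c(1) by (rule AA.generate_subgroup_incl[OF _ P]) (use kc cA in auto)
  then have sub: "kap \<sigma> ` C \<subseteq> Rot" by auto
  have "card (kap \<sigma> ` C) = n" using card_image[OF inj_on_subset[OF kap_inj[OF s] CA]] cardC by simp
  moreover have "finite Rot" unfolding Rot_def using DRot_sub finite_V by (auto intro: finite_subset)
  ultimately show ?thesis using sub card_Rot by (metis card_subset_eq)
qed

lemma iso_facts:
  assumes RA: "subgroup R AA" and phi: "\<phi> \<in> iso (AA\<lparr>carrier := R\<rparr>) D"
  shows "\<And>x y. x \<in> R \<Longrightarrow> y \<in> R \<Longrightarrow> \<phi> (x \<otimes>\<^bsub>AA\<^esub> y) = \<phi> x \<otimes>\<^bsub>D\<^esub> \<phi> y"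
    and "bij_betw \<phi> R V"
    and "\<phi> \<one>\<^bsub>AA\<^esub> = \<one>\<^bsub>D\<^esub>"
proof -
  show h: "\<And>x y. x \<in> R \<Longrightarrow> y \<in> R \<Longrightarrow> \<phi> (x \<otimes>\<^bsub>AA\<^esub> y) = \<phi> x \<otimes>\<^bsub>D\<^esub> \<phi> y"
    using phi by (auto simp: iso_def hom_def)
  show b: "bij_betw \<phi> R V" using phi by (auto simp: iso_def)
  have o: "\<one>\<^bsub>AA\<^esub> \<in> R" using subgroup.one_closed[OF RA] .
  have oV: "\<phi> \<one>\<^bsub>AA\<^esub> \<in> V" using b o by (auto simp: bij_betw_def)
  have "\<phi> \<one>\<^bsub>AA\<^esub> \<otimes>\<^bsub>D\<^esub> \<phi> \<one>\<^bsub>AA\<^esub> = \<phi> \<one>\<^bsub>AA\<^esub>" using h[OF o o] by simp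
  then show "\<phi> \<one>\<^bsub>AA\<^esub> = \<one>\<^bsub>D\<^esub>" using oV by simp
qed

lemma refl_sq:
  assumes RA: "subgroup R AA" and phi: "\<phi> \<in> iso (AA\<lparr>carrier := R\<rparr>) D"
    and CR: "C \<subseteq> R" and c: "C = generate AA {c}" "c \<in> C" and cardC: "card C = n"
    and y: "y \<in> R" "y \<notin> C"
  shows "y \<otimes>\<^bsub>AA\<^esub> y = \<one>\<^bsub>AA\<^esub>"
proof -
  note h = iso_facts(1)[OF RA phi] and b = iso_facts(2)[OF RA phi] and o = iso_facts(3)[OF RA phi]
  have inj: "inj_on \<phi> R" and img: "\<phi> ` R = V" using b by (auto simp: bij_betw_def)
  have RA': "R \<subseteq> carrier AA" using subgroup.subset[OF RA] .
  have oR: "\<one>\<^bsub>AA\<^esub> \<in> R" using subgroup.one_closed[OF RA] .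
  have sq: "z \<otimes>\<^bsub>AA\<^esub> z = \<one>\<^bsub>AA\<^esub>" if z: "z \<in> R" "snd (\<phi> z)" for z
  proof -
    have "\<phi> z \<in> V" using z img by auto
    then have "\<phi> (z \<otimes>\<^bsub>AA\<^esub> z) = \<phi> \<one>\<^bsub>AA\<^esub>" using h[OF z(1) z(1)] D_refl_sq z o by simp
    then show ?thesis using inj z oR subgroup.m_closed[OF RA] by (auto dest: inj_onD)
  qed
  have cR: "c \<in> R" using c CR by auto
  have cA: "c \<in> carrier AA" using cR RA' by auto
  have nc: "\<not> snd (\<phi> c)"
    using sq[OF cR] gen_card_ge[OF cA] c cardC by auto
  have P: "subgroup {z \<in> R. \<not> snd (\<phi> z)} AA"
  proof (rule AA.subgroupI)
    show "{z \<in> R. \<not> snd (\<phi> z)} \<subseteq> carrier AA" using RA' by auto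
    show "{z \<in> R. \<not> snd (\<phi> z)} \<noteq> {}" using oR o snd_one by auto
  next
    fix z assume z: "z \<in> {z \<in> R. \<not> snd (\<phi> z)}"
    then have zR: "z \<in> R" "inv\<^bsub>AA\<^esub> z \<in> R" using subgroup.m_inv_closed[OF RA] by auto
    have "\<phi> (inv\<^bsub>AA\<^esub> z \<otimes>\<^bsub>AA\<^esub> z) = \<one>\<^bsub>D\<^esub>" using zR RA' o AA.l_inv[of z] by auto
    then have "snd (\<phi> (inv\<^bsub>AA\<^esub> z)) = snd (\<phi> z)" using h[OF zR(2) zR(1)] snd_mult[of "\<phi> (inv\<^bsub>AA\<^esub> z)" "\<phi> z"] snd_one by simp
    then show "inv\<^bsub>AA\<^esub> z \<in> {z \<in> R. \<not> snd (\<phi> z)}" using z zR by simp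
  next
    fix x z assume "x \<in> {z \<in> R. \<not> snd (\<phi> z)}" "z \<in> {z \<in> R. \<not> snd (\<phi> z)}"
    then show "x \<otimes>\<^bsub>AA\<^esub> z \<in> {z \<in> R. \<not> snd (\<phi> z)}"
      using h snd_mult subgroup.m_closed[OF RA] by auto
  qed
  have "C \<subseteq> {z \<in> R. \<not> snd (\<phi> z)}"
    unfolding c(1) by (rule AA.generate_subgroup_incl[OF _ P]) (use nc cR in auto)
  then have sub: "\<phi> ` C \<subseteq> DRot" using img by (auto simp: DRot_def)
  have "card (\<phi> ` C) = n" using card_image[OF inj_on_subset[OF inj CR]] cardC by simp
  moreover have "finite DRot" using DRot_sub finite_V by (auto intro: finite_subset)
  ultimately have eq: "\<phi> ` C = DRot" using sub card_DRot by (metis card_subset_eq)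
  have "snd (\<phi> y)"
  proof (rule ccontr)
    assume "\<not> snd (\<phi> y)"
    then have "\<phi> y \<in> \<phi> ` C" using eq img y by (auto simp: DRot_def)
    then show False using inj y CR by (auto dest: inj_onD)
  qed
  then show ?thesis using sq y by simp
qed

end



context dcay begin

lemma b_V: "dih_b \<in> V" using n0 by (simp add: dih_b_def dcarrier)

lemma r_is_b:
  assumes r: "r \<in> carrier AA" and r0: "r (0, False) = (0, True)"
    and inv: "\<And>v. v \<in> V \<Longrightarrow> r (r v) = v"
    and rel: "\<And>v. v \<in> V \<Longrightarrow> r (Rm (dih_a n) (r (Rm (dih_a n) v))) = v"
  shows "r = Rm dih_b"
proof -
  have rV: "\<And>v. v \<in> V \<Longrightarrow> r v \<in> V" using aut_funcset[OF r] .
  have step: "r (v \<otimes>\<^bsub>D\<^esub> dih_a n) \<otimes>\<^bsub>D\<^esub> dih_a n = r v" if v: "v \<in> V" for v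
  proof -
    have va: "v \<otimes>\<^bsub>D\<^esub> dih_a n \<in> V" using v a_V by simp
    have z: "r (v \<otimes>\<^bsub>D\<^esub> dih_a n) \<otimes>\<^bsub>D\<^esub> dih_a n \<in> V" using rV[OF va] a_V by simp
    have "r (r (v \<otimes>\<^bsub>D\<^esub> dih_a n) \<otimes>\<^bsub>D\<^esub> dih_a n) = v"
      using rel[OF v] v rV[OF va] by (simp add: Rm_apply)
    then have "r (r (r (v \<otimes>\<^bsub>D\<^esub> dih_a n) \<otimes>\<^bsub>D\<^esub> dih_a n)) = r v" by simp
    then show ?thesis using inv[OF z] by simp
  qed
  have rot: "r (i, False) = (i, True)" if "i < n" for i
    using that
  proof (induction i)
    case 0 show ?case using r0 by simp
  next
    case (Suc i)
    have vV: "(i, False) \<in> V" using Suc by (simp add: dcarrier)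
    have e1: "(i, False) \<otimes>\<^bsub>D\<^esub> dih_a n = (Suc i, False)" using Suc by (simp add: a_eq dmult)
    obtain p q where pq: "r (Suc i, False) = (p, q)" by fastforce
    have p: "p < n" using rV[of "(Suc i, False)"] Suc pq by (simp add: dcarrier)
    have "(p, q) \<otimes>\<^bsub>D\<^esub> (1, False) = (i, True)"
      using step[OF vV] e1 pq Suc by (simp add: a_eq)
    then have q: "q" and m: "(p + n - 1) mod n = i" by (auto simp: dmult split: if_splits)
    have "p = Suc i"
    proof (cases p)
      case 0
      then have "(p + n - 1) mod n = n - 1" using n0 by simp
      then show ?thesis using m Suc by simp
    next
      case (Suc p')
      then have "(p + n - 1) mod n = p'" using p by simp
      then show ?thesis using m Suc by simp
    qed
    then show ?case using pq q by simp
  qed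
  show ?thesis
  proof (rule aut_eqI[OF r Rm_aut[OF b_V]])
    fix v assume v: "v \<in> V"
    obtain i s where e: "v = (i, s)" by fastforce
    have i: "i < n" using v e by (simp add: dcarrier)
    show "r v = Rm dih_b v"
    proof (cases s)
      case True
      have "r (i, True) = (i, False)" using rot[OF i] inv[of "(i, False)"] i by (simp add: dcarrier)
      then show ?thesis using e True v i by (simp add: Rm_apply dih_b_def dmult)
    next
      case False
      then show ?thesis using e v i rot[OF i] by (simp add: Rm_apply dih_b_def dmult)
    qed
  qed
qed

lemma bwd:
  assumes reg: "regular_on AA V R" and phi: "\<phi> \<in> iso (AA\<lparr>carrier := R\<rparr>) D"
    and CR: "C \<subseteq> R" and CS: "subgroup C AA" and c: "C = generate AA {c}" "c \<in> C" and cardC: "card C = n"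
    and s: "\<sigma> \<in> carrier AA" and KC: "kap \<sigma> ` C = Rot"
  shows "kap \<sigma> ` R = right_reg D"
proof -
  have RA: "subgroup R AA" and trans: "\<And>u w. u \<in> V \<Longrightarrow> w \<in> V \<Longrightarrow> \<exists>r\<in>R. r u = w"
    using reg by (auto simp: regular_on_def)
  have RA': "R \<subseteq> carrier AA" using subgroup.subset[OF RA] .
  have is': "inv\<^bsub>AA\<^esub> \<sigma> \<in> carrier AA" using s by simp
  have kap_apply: "kap \<sigma> y v = \<sigma> (y ((inv\<^bsub>AA\<^esub> \<sigma>) v))" if y: "y \<in> carrier AA" and v: "v \<in> V" for y v
  proof -
    have "kap \<sigma> y v = (\<sigma> \<otimes>\<^bsub>AA\<^esub> y) ((inv\<^bsub>AA\<^esub> \<sigma>) v)"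
      unfolding kap_def using aut_mult_apply[of "\<sigma> \<otimes>\<^bsub>AA\<^esub> y" "dihedral n" S "inv\<^bsub>AA\<^esub> \<sigma>" v] s y v by simp
    also have "\<dots> = \<sigma> (y ((inv\<^bsub>AA\<^esub> \<sigma>) v))" using aut_mult_apply s y aut_funcset[OF is' v] by metis
    finally show ?thesis .
  qed
  have sinv: "\<sigma> ((inv\<^bsub>AA\<^esub> \<sigma>) w) = w" if w: "w \<in> V" for w
    using aut_mult_apply[OF s is' w] aut_one_apply[OF w, of S] s by simp
  define u where "u = (inv\<^bsub>AA\<^esub> \<sigma>) (0, False)"
  define w where "w = (inv\<^bsub>AA\<^esub> \<sigma>) (0, True)"
  have uw: "u \<in> V" "w \<in> V" unfolding u_def w_def using aut_funcset[OF is'] n0 by (auto simp: dcarrier)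
  obtain x where x: "x \<in> R" "x u = w" using trans[OF uw] by blast
  have xA: "x \<in> carrier AA" using x RA' by auto
  define r where "r = kap \<sigma> x"
  have rA: "r \<in> carrier AA" unfolding r_def using kap_closed[OF s xA] .
  have r0: "r (0, False) = (0, True)"
    unfolding r_def using kap_apply[OF xA, of "(0, False)"] x sinv n0 by (simp add: dcarrier u_def w_def)
  have xC: "x \<notin> C"
  proof
    assume "x \<in> C"
    then have "r \<in> Rot" using KC r_def by auto
    then obtain i where "r = Rm (i, False)" by (auto simp: Rot_def DRot_def)
    then show False using r0 n0 by (simp add: Rm_apply dcarrier dmult)
  qed
  have "Rm (dih_a n) \<in> Rot" using a_V a_eq by (auto simp: Rot_def DRot_def)
  then obtain c0 where c0: "c0 \<in> C" "kap \<sigma> c0 = Rm (dih_a n)" using KC by force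
  have c0A: "c0 \<in> carrier AA" using c0 CR RA' by auto
  have xc0R: "x \<otimes>\<^bsub>AA\<^esub> c0 \<in> R" using subgroup.m_closed[OF RA x(1)] c0 CR by auto
  have xc0C: "x \<otimes>\<^bsub>AA\<^esub> c0 \<notin> C"
  proof
    assume h: "x \<otimes>\<^bsub>AA\<^esub> c0 \<in> C"
    have "x = (x \<otimes>\<^bsub>AA\<^esub> c0) \<otimes>\<^bsub>AA\<^esub> inv\<^bsub>AA\<^esub> c0" using xA c0A by (simp add: AA.m_assoc)
    also have "\<dots> \<in> C" using h c0 CS by (simp add: subgroup.m_closed subgroup.m_inv_closed)
    finally show False using xC by simp
  qed
  have sq1: "x \<otimes>\<^bsub>AA\<^esub> x = \<one>\<^bsub>AA\<^esub>" using refl_sq[OF RA phi CR c cardC x(1) xC] .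
  have sq2: "(x \<otimes>\<^bsub>AA\<^esub> c0) \<otimes>\<^bsub>AA\<^esub> (x \<otimes>\<^bsub>AA\<^esub> c0) = \<one>\<^bsub>AA\<^esub>" using refl_sq[OF RA phi CR c cardC xc0R xc0C] .
  have rr: "r \<otimes>\<^bsub>AA\<^esub> r = \<one>\<^bsub>AA\<^esub>" unfolding r_def using kap_mult[OF s xA xA] sq1 kap_one[OF s] by simp
  have RaA: "Rm (dih_a n) \<in> carrier AA" using Rm_aut[OF a_V] .
  have ra: "(r \<otimes>\<^bsub>AA\<^esub> Rm (dih_a n)) \<otimes>\<^bsub>AA\<^esub> (r \<otimes>\<^bsub>AA\<^esub> Rm (dih_a n)) = \<one>\<^bsub>AA\<^esub>"
    unfolding r_def using kap_mult[OF s xA c0A] kap_mult[OF s, of "x \<otimes>\<^bsub>AA\<^esub> c0" "x \<otimes>\<^bsub>AA\<^esub> c0"] xA c0A sq2 kap_one[OF s] c0(2)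
    by simp
  have inv: "r (r v) = v" if v: "v \<in> V" for v
    using aut_mult_apply[OF rA rA v] rr aut_one_apply[OF v, of S] by simp
  have rel: "r (Rm (dih_a n) (r (Rm (dih_a n) v))) = v" if v: "v \<in> V" for v
  proof -
    have m: "r \<otimes>\<^bsub>AA\<^esub> Rm (dih_a n) \<in> carrier AA" using rA RaA by simp
    have "((r \<otimes>\<^bsub>AA\<^esub> Rm (dih_a n)) \<otimes>\<^bsub>AA\<^esub> (r \<otimes>\<^bsub>AA\<^esub> Rm (dih_a n))) v = v"
      using ra aut_one_apply[OF v, of S] by simp
    moreover have "((r \<otimes>\<^bsub>AA\<^esub> Rm (dih_a n)) \<otimes>\<^bsub>AA\<^esub> (r \<otimes>\<^bsub>AA\<^esub> Rm (dih_a n))) v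
        = r (Rm (dih_a n) (r (Rm (dih_a n) v)))"
      using aut_mult_apply[OF m m v] aut_mult_apply[OF rA RaA v]
        aut_mult_apply[OF rA RaA aut_funcset[OF m v]] by simp
    ultimately show ?thesis by simp
  qed
  have rb: "r = Rm dih_b" using r_is_b[OF rA r0 inv rel] by simp
  have RotR: "Rot \<subseteq> kap \<sigma> ` R" using KC CR by auto
  have sub: "right_reg D \<subseteq> kap \<sigma> ` R"
  proof
    fix q assume "q \<in> right_reg D"
    then obtain g where g: "g \<in> V" "q = Rm g" by (auto simp: right_reg_def)
    obtain i t where e: "g = (i, t)" by fastforce
    have i: "i < n" using g e by (simp add: dcarrier)
    show "q \<in> kap \<sigma> ` R"
    proof (cases t)
      case False
      then show ?thesis using RotR g e by (auto simp: Rot_def DRot_def)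
    next
      case True
      have iV: "(i, False) \<in> V" using i by (simp add: dcarrier)
      have "Rm (i, False) \<in> Rot" using iV by (auto simp: Rot_def DRot_def)
      then obtain y where y: "y \<in> C" "kap \<sigma> y = Rm (i, False)" using KC by force
      have yA: "y \<in> carrier AA" using y CR RA' by auto
      have "q = Rm dih_b \<otimes>\<^bsub>AA\<^esub> Rm (i, False)"
        using g e True Rm_mult[OF b_V iV] i by (simp add: dih_b_def dmult)
      also have "\<dots> = kap \<sigma> (x \<otimes>\<^bsub>AA\<^esub> y)" using kap_mult[OF s xA yA] rb r_def y by simp
      also have "\<dots> \<in> kap \<sigma> ` R" using subgroup.m_closed[OF RA x(1)] y CR by auto
      finally show ?thesis .
    qed
  qed
  have b: "bij_betw \<phi> R V" using iso_facts(2)[OF RA phi] .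
  have finR: "finite R" using bij_betw_finite[OF b] finite_V by simp
  have cardR: "card R = 2 * n" using bij_betw_same_card[OF b] card_V by simp
  have "card (kap \<sigma> ` R) \<le> 2 * n" using card_image_le[OF finR] cardR by simp
  then show ?thesis using card_seteq[OF finite_imageI[OF finR] sub] card_RG by simp
qed

end

theorem lemma4p1:
  fixes n :: nat and S :: "(nat \<times> bool) set" and R C :: "(nat \<times> bool \<Rightarrow> nat \<times> bool) set"
  assumes "n \<ge> 3"
    and "S \<subseteq> carrier (dihedral n)" and "\<one>\<^bsub>dihedral n\<^esub> \<notin> S"
    and "regular_on (cay_aut_group (dihedral n) S) (carrier (dihedral n)) R"
    and "(cay_aut_group (dihedral n) S)\<lparr>carrier := R\<rparr> \<cong> dihedral n"
    and "C \<subseteq> R" and "subgroup C (cay_aut_group (dihedral n) S)"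
    and "\<exists>c\<in>C. C = generate (cay_aut_group (dihedral n) S) {c}"
    and "card C = n"
  shows "conjugate_in (cay_aut_group (dihedral n) S) R (right_reg (dihedral n))
     \<longleftrightarrow> conjugate_in (cay_aut_group (dihedral n) S) C
           (generate (cay_aut_group (dihedral n) S) {right_mult (dihedral n) (dih_a n)})"
proof -
  interpret dcay n S using assms(1,2) by unfold_locales
  obtain \<phi> where phi: "\<phi> \<in> iso (AA\<lparr>carrier := R\<rparr>) D" using assms(5) by (auto simp: is_iso_def)
  obtain c where c: "c \<in> C" "C = generate AA {c}" using assms(8) by blast
  have RA: "subgroup R AA" using assms(4) by (simp add: regular_on_def)
  have RA': "R \<subseteq> carrier AA" using subgroup.subset[OF RA] .
  have k: "(\<lambda>h. \<sigma> \<otimes>\<^bsub>AA\<^esub> h \<otimes>\<^bsub>AA\<^esub> inv\<^bsub>AA\<^esub> \<sigma>) = kap \<sigma>" for \<sigma>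
    by (simp add: kap_def fun_eq_iff)
  show ?thesis
    unfolding conjugate_in_def k gen_Rot
  proof
    assume "\<exists>\<sigma>\<in>carrier AA. kap \<sigma> ` R = right_reg D"
    then obtain \<sigma> where "\<sigma> \<in> carrier AA" "kap \<sigma> ` R = right_reg D" by blast
    then show "\<exists>\<sigma>\<in>carrier AA. kap \<sigma> ` C = Rot"
      using fwd[OF _ _ assms(6) RA' c(2) c(1) assms(9)] by blast
  next
    assume "\<exists>\<sigma>\<in>carrier AA. kap \<sigma> ` C = Rot"
    then obtain \<sigma> where "\<sigma> \<in> carrier AA" "kap \<sigma> ` C = Rot" by blast
    then show "\<exists>\<sigma>\<in>carrier AA. kap \<sigma> ` R = right_reg D"
      using bwd[OF assms(4) phi assms(6,7) c(2) c(1) assms(9)] by blast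
  qed
qed


end
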